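(* Let $W_1,W_2,W_3\in\mathbb R^{n\times n}$, $J\in\mathbb R^n$, and $\Phi:\mathbb R^n\to\mathbb R^n$ with $\|\Phi(x)-\Phi(y)\|\le\|W_3(x-y)\|$ for all $x,y$ (Euclidean norm). Let $x^\star\in\mathbb R^n$ satisfy $W_1x^\star+W_2\Phi(x^\star)+J=0$. Suppose there exist $\delta>0$ and $\varepsilon>0$ with $$\tfrac12\big(W_1+W_1^T+\varepsilon W_2W_2^T+\varepsilon^{-1}W_3^TW_3\big)\le\delta I$$ (in the positive semidefinite order). Let $\epsilon_1,\epsilon_2>0$, $0<p<1$, $q>1$, $\bar\alpha=\epsilon_12^{(1+p)/2}$, $\bar\beta=\epsilon_2n^{(1-q)/2}2^{(1+q)/2}$, and assume $\bar\alpha-2\delta>0$, $\bar\beta-2\delta>0$. Then every solution of $$\dot x=W_1x+W_2\Phi(x)+J-\epsilon_1\mathrm{sig}^p(x-x^\star)-\epsilon_2\mathrm{sig}^q(x-x^\star)$$ satisfies $x(t)=x^\star$ for all $t\ge T_{\max}=\frac{2}{(\bar\alpha-2\delta)(1-p)}+\frac{2}{(\bar\beta-2\delta)(q-1)}$, whatever the initial value.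
   Context: For $x\in\mathbb R^n$ and $r>0$, $\mathrm{sig}^r(x)=(\mathrm{sign}(x^1)|x^1|^r,\dots,\mathrm{sign}(x^n)|x^n|^r)^T$. *)

theory Defs
  imports "HOL-Analysis.Analysis"
begin

definition sig :: "real \<Rightarrow> real^'n \<Rightarrow> real^'n" where
  "sig r x = (\<chi> i. sgn (x $ i) * \<bar>x $ i\<bar> powr r)"

definition psd :: "real^'n^'n \<Rightarrow> bool" where
  "psd M \<longleftrightarrow> (\<forall>v. 0 \<le> v \<bullet> (M *v v))"

definition loewner_le :: "real^'n^'n \<Rightarrow> real^'n^'n \<Rightarrow> bool" where
  "loewner_le A B \<longleftrightarrow> psd (B - A)"

end

theory Submission
  imports Defs
begin


lemma sum_powr_ge_pow_mean:
  fixes a :: "'i \<Rightarrow> real" and k :: real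
  assumes fin: "finite S" and nn: "\<And>i. i \<in> S \<Longrightarrow> a i \<ge> 0" and k: "k \<ge> 1"
  shows "real (card S) powr (1 - k) * (\<Sum>i\<in>S. a i) powr k \<le> (\<Sum>i\<in>S. a i powr k)"
proof -
  define P where "P = {i\<in>S. a i > 0}"
  have finP: "finite P" using fin by (simp add: P_def)
  have s1: "(\<Sum>i\<in>S. a i) = (\<Sum>i\<in>P. a i)"
    unfolding P_def using fin nn by (intro sum.mono_neutral_right) (auto simp: order.order_iff_strict)
  have s2: "(\<Sum>i\<in>S. a i powr k) = (\<Sum>i\<in>P. a i powr k)"
    unfolding P_def using fin nn by (intro sum.mono_neutral_right) (auto simp: order.order_iff_strict)
  show ?thesis
  proof (cases "P = {}")
    case True
    then show ?thesis using s1 s2 by simp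
  next
    case False
    define m where "m = real (card P)"
    have m1: "m \<ge> 1" using False finP by (simp add: m_def Suc_le_eq card_gt_0_iff)
    have mle: "m \<le> real (card S)" unfolding m_def P_def using fin by (intro of_nat_mono card_mono) auto
    have conv: "convex_on {0<..} (\<lambda>x. x powr k)" using powr_convex k by blast
    have J: "(\<Sum>i\<in>P. (1/m) *\<^sub>R a i) powr k \<le> (\<Sum>i\<in>P. (1/m) * a i powr k)"
      using convex_on_sum[OF finP False conv, of "\<lambda>_. 1/m" a] m1
      by (auto simp: m_def P_def)
    have "(\<Sum>i\<in>P. (1/m) *\<^sub>R a i) = (\<Sum>i\<in>P. a i) / m" by (simp add: sum_divide_distrib)
    moreover have "(\<Sum>i\<in>P. (1/m) * a i powr k) = (\<Sum>i\<in>P. a i powr k) / m" by (simp add: sum_divide_distrib)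
    ultimately have J2: "((\<Sum>i\<in>P. a i) / m) powr k \<le> (\<Sum>i\<in>P. a i powr k) / m" using J by simp
    have pos: "(\<Sum>i\<in>P. a i) \<ge> 0" using nn by (auto intro: sum_nonneg simp: P_def)
    have "((\<Sum>i\<in>P. a i) / m) powr k = (\<Sum>i\<in>P. a i) powr k / m powr k"
      using pos m1 by (simp add: powr_divide)
    hence "(\<Sum>i\<in>P. a i) powr k / m powr k \<le> (\<Sum>i\<in>P. a i powr k) / m" using J2 by simp
    hence "m * ((\<Sum>i\<in>P. a i) powr k / m powr k) \<le> (\<Sum>i\<in>P. a i powr k)" using m1
      by (simp add: field_simps)
    moreover have "m * ((\<Sum>i\<in>P. a i) powr k / m powr k) = m powr (1-k) * (\<Sum>i\<in>P. a i) powr k"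
      using m1 by (simp add: powr_diff)
    moreover have "real (card S) powr (1 - k) \<le> m powr (1 - k)"
      using mle m1 k by (intro powr_mono2') auto
    moreover have "(\<Sum>i\<in>P. a i) powr k \<ge> 0" by simp
    ultimately show ?thesis using s1 s2 by (metis mult_right_mono order_trans)
  qed
qed

lemma sum_powr_ge_sub:
  fixes a :: "'i \<Rightarrow> real" and s :: real
  assumes fin: "finite S" and nn: "\<And>i. i \<in> S \<Longrightarrow> a i \<ge> 0" and s: "0 < s" "s \<le> 1"
  shows "(\<Sum>i\<in>S. a i) powr s \<le> (\<Sum>i\<in>S. a i powr s)"
proof (cases "(\<Sum>i\<in>S. a i) = 0")
  case True then show ?thesis by (simp add: sum_nonneg)
next
  case False
  define T where "T = (\<Sum>i\<in>S. a i)"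
  have "T \<ge> 0" using nn by (simp add: T_def sum_nonneg)
  hence Tpos: "T > 0" using False by (simp add: T_def)
  have each: "a i / T \<le> (a i / T) powr s" if "i \<in> S" for i
  proof -
    have le: "a i \<le> T" unfolding T_def using fin nn that by (intro member_le_sum) auto
    have "0 \<le> a i / T" "a i / T \<le> 1" using nn[OF that] Tpos le by auto
    then show ?thesis using s
      by (metis order.order_iff_strict powr_one_eq_one powr_zero_eq_one powr_le1 powr_mono2'
             le_less_trans less_le_not_le zero_le_divide_iff  powr_mono' powr_one)
  qed
  have "1 = (\<Sum>i\<in>S. a i / T)" using Tpos by (simp add: T_def sum_divide_distrib[symmetric])
  also have "\<dots> \<le> (\<Sum>i\<in>S. (a i / T) powr s)" using each by (intro sum_mono) auto
  also have "\<dots> = (\<Sum>i\<in>S. a i powr s) / T powr s"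
    using nn Tpos by (simp add: powr_divide sum_divide_distrib)
  finally show ?thesis using Tpos by (simp add: T_def field_simps)
qed



lemma tr_inner:
  fixes A :: "real^'n^'n" and u v :: "real^'n"
  shows "u \<bullet> (transpose A *v v) = (A *v u) \<bullet> v"
  by (metis dot_lmul_matrix inner_commute transpose_matrix_vector)

lemma lin_part:
  fixes W1 W2 W3 :: "real^'n^'n" and e d :: "real^'n"
  assumes lip: "norm d \<le> norm (W3 *v e)"
    and \<epsilon>pos: "\<epsilon> > 0"
    and lmi: "loewner_le ((1/2) *\<^sub>R (W1 + transpose W1 + \<epsilon> *\<^sub>R (W2 ** transpose W2)
                 + inverse \<epsilon> *\<^sub>R (transpose W3 ** W3))) (\<delta> *\<^sub>R mat 1)"
  shows "e \<bullet> (W1 *v e + W2 *v d) \<le> \<delta> * (e \<bullet> e)"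
proof -
  define M where "M = W1 + transpose W1 + \<epsilon> *\<^sub>R (W2 ** transpose W2) + inverse \<epsilon> *\<^sub>R (transpose W3 ** W3)"
  have "0 \<le> e \<bullet> ((\<delta> *\<^sub>R mat 1 - (1/2) *\<^sub>R M) *v e)"
    using lmi unfolding loewner_le_def psd_def M_def by blast
  also have "\<dots> = \<delta> * (e \<bullet> e) - (1/2) * (e \<bullet> (M *v e))"
    by (simp add: matrix_vector_mult_diff_rdistrib scaleR_matrix_vector_assoc[symmetric] inner_diff_right)
  also have "e \<bullet> (M *v e) = 2 * (e \<bullet> (W1 *v e)) + \<epsilon> * ((transpose W2 *v e) \<bullet> (transpose W2 *v e))
       + inverse \<epsilon> * ((W3 *v e) \<bullet> (W3 *v e))"
  proof -
    have "e \<bullet> (M *v e) = e \<bullet> (W1 *v e) + e \<bullet> (transpose W1 *v e) + \<epsilon> * (e \<bullet> (W2 *v (transpose W2 *v e)))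
       + inverse \<epsilon> * (e \<bullet> (transpose W3 *v (W3 *v e)))"
      by (simp add: M_def matrix_vector_mult_add_rdistrib scaleR_matrix_vector_assoc[symmetric]
          matrix_vector_mul_assoc inner_add_right del: transpose_matrix_vector)
    also have "e \<bullet> (transpose W1 *v e) = e \<bullet> (W1 *v e)" using tr_inner[where A=W1 and u=e and v=e] by (simp add: inner_commute del: transpose_matrix_vector)
    also have "e \<bullet> (W2 *v (transpose W2 *v e)) = (transpose W2 *v e) \<bullet> (transpose W2 *v e)"
      using tr_inner[where A="transpose W2" and u=e] by (simp del: transpose_matrix_vector)
    also have "e \<bullet> (transpose W3 *v (W3 *v e)) = (W3 *v e) \<bullet> (W3 *v e)"
      using tr_inner[where A=W3 and u=e] by (simp del: transpose_matrix_vector)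
    finally show ?thesis by simp
  qed
  finally have L: "e \<bullet> (W1 *v e) + (\<epsilon> * ((transpose W2 *v e) \<bullet> (transpose W2 *v e))
       + inverse \<epsilon> * ((W3 *v e) \<bullet> (W3 *v e))) / 2 \<le> \<delta> * (e \<bullet> e)" by (simp add: field_simps del: transpose_matrix_vector)
  define u where "u = transpose W2 *v e"
  have ed: "e \<bullet> (W2 *v d) = u \<bullet> d" using tr_inner[where A="transpose W2" and u=e and v=d] by (simp add: u_def del: transpose_matrix_vector)
  have "2 * (u \<bullet> d) \<le> \<epsilon> * (u \<bullet> u) + inverse \<epsilon> * (d \<bullet> d)"
  proof -
    have "0 \<le> (sqrt \<epsilon> *\<^sub>R u - inverse (sqrt \<epsilon>) *\<^sub>R d) \<bullet> (sqrt \<epsilon> *\<^sub>R u - inverse (sqrt \<epsilon>) *\<^sub>R d)"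
      by simp
    also have "\<dots> = \<epsilon> * (u \<bullet> u) + inverse \<epsilon> * (d \<bullet> d) - 2 * (u \<bullet> d)"
      using \<epsilon>pos by (simp add: inner_diff_left inner_diff_right inner_commute power2_eq_square[symmetric]
          real_sqrt_mult[symmetric] field_simps)
    finally show ?thesis by simp
  qed
  moreover have "d \<bullet> d \<le> (W3 *v e) \<bullet> (W3 *v e)"
    using lip by (simp add: power2_norm_eq_inner[symmetric] norm_ge_zero power_mono)
  ultimately have "2 * (u \<bullet> d) \<le> \<epsilon> * (u \<bullet> u) + inverse \<epsilon> * ((W3 *v e) \<bullet> (W3 *v e))"
    using \<epsilon>pos by (smt (verit) inverse_positive_iff_positive mult_left_mono)
  then have F: "2 * ((transpose W2 *v e) \<bullet> d) \<le> \<epsilon> * ((transpose W2 *v e) \<bullet> (transpose W2 *v e)) + inverse \<epsilon> * ((W3 *v e) \<bullet> (W3 *v e))"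
    by (simp only: u_def)
  have ed2: "e \<bullet> (W2 *v d) = (transpose W2 *v e) \<bullet> d" using ed by (simp only: u_def)
  have G: "e \<bullet> (W1 *v e) + e \<bullet> (W2 *v d) \<le> \<delta> * (e \<bullet> e)"
    unfolding ed2 using L F by (simp add: field_simps del: transpose_matrix_vector)
  show ?thesis using G by (simp add: inner_add_right)
qed



lemma inner_sig:
  fixes e :: "real^'n" assumes r: "r > 0"
  shows "e \<bullet> sig r e = (\<Sum>i\<in>UNIV. ((e$i)^2) powr ((1 + r)/2))"
proof -
  have "e$i * (sgn (e$i) * \<bar>e$i\<bar> powr r) = ((e$i)^2) powr ((1 + r)/2)" for i
  proof (cases "e$i = 0")
    case True then show ?thesis using r by simp
  next
    case False
    have "e$i * (sgn (e$i) * \<bar>e$i\<bar> powr r) = \<bar>e$i\<bar> * \<bar>e$i\<bar> powr r"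
      by (simp add: abs_sgn mult.commute mult.left_commute)
    also have "\<dots> = \<bar>e$i\<bar> powr (1 + r)" using False by (simp add: powr_add)
    also have "\<dots> = (\<bar>e$i\<bar> powr 2) powr ((1+r)/2)"
      proof -
        have "2*((1+r)/2) = 1+r" by simp
        then show ?thesis by (simp only: powr_powr)
      qed
    also have "\<bar>e$i\<bar> powr 2 = (e$i)^2" using False by (simp add: powr_numeral)
    finally show ?thesis .
  qed
  then show ?thesis unfolding inner_vec_def sig_def by simp
qed

lemma inner_self_sum: "(e::real^'n) \<bullet> e = (\<Sum>i\<in>UNIV. (e$i)^2)"
  by (simp add: inner_vec_def power2_eq_square)

lemma sig_low:
  fixes e :: "real^'n" assumes p: "0 < p" "p < 1"
  shows "(e \<bullet> e) powr ((1+p)/2) \<le> e \<bullet> sig p e"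
  unfolding inner_sig[OF p(1)] inner_self_sum
  using p by (intro sum_powr_ge_sub) auto

lemma sig_high:
  fixes e :: "real^'n" assumes q: "q > 1"
  shows "real CARD('n) powr ((1-q)/2) * (e \<bullet> e) powr ((1+q)/2) \<le> e \<bullet> sig q e"
proof -
  have "real CARD('n) powr (1 - (1+q)/2) * (e \<bullet> e) powr ((1+q)/2) \<le> e \<bullet> sig q e"
    unfolding inner_sig[OF order.strict_trans[OF zero_less_one q]] inner_self_sum
    using q by (intro sum_powr_ge_pow_mean) auto
  moreover have "1 - (1+q)/2 = (1-q)/2" by (simp add: field_simps)
  ultimately show ?thesis by simp
qed



lemma incr_lemma:
  fixes g g' :: "real \<Rightarrow> real"
  assumes ab: "a \<le> b" and cont: "continuous_on {a..b} g"
    and der: "\<And>t. a < t \<Longrightarrow> t < b \<Longrightarrow> (g has_real_derivative g' t) (at t)"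
    and nn: "\<And>t. a < t \<Longrightarrow> t < b \<Longrightarrow> g' t \<ge> 0"
  shows "g a \<le> g b"
  using DERIV_nonneg_imp_increasing_open[OF ab _ cont] der nn by blast

lemma settle:
  fixes V V' :: "real \<Rightarrow> real" and \<alpha> \<beta> \<delta> m k :: real
  assumes cont: "continuous_on {0..} V"
    and der: "\<And>t. t > 0 \<Longrightarrow> (V has_real_derivative V' t) (at t)"
    and nn: "\<And>t. t \<ge> 0 \<Longrightarrow> V t \<ge> 0"
    and bnd: "\<And>t. t > 0 \<Longrightarrow> V' t \<le> 2*\<delta>*V t - \<alpha> * V t powr m - \<beta> * V t powr k"
    and \<delta>: "\<delta> > 0" and m: "0 < m" "m < 1" and k: "k > 1"
    and A: "\<alpha> - 2*\<delta> > 0" and B: "\<beta> - 2*\<delta> > 0"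
  shows "\<forall>t \<ge> 1/((\<alpha> - 2*\<delta>)*(1-m)) + 1/((\<beta> - 2*\<delta>)*(k-1)). V t = 0"
proof -
  define A' where "A' = \<alpha> - 2*\<delta>"
  define B' where "B' = \<beta> - 2*\<delta>"
  have A'pos: "A' > 0" and B'pos: "B' > 0" using A B by (auto simp: A'_def B'_def)
  have \<alpha>pos: "\<alpha> > 0" and \<beta>pos: "\<beta> > 0" using A B \<delta> by auto
  have low: "V' t \<le> - A' * V t powr m" if "t > 0" "V t \<le> 1" for t
  proof -
    have v0: "V t \<ge> 0" using nn that by simp
    have "V t \<le> V t powr m"
    proof (cases "V t = 0")
      case False
      then have "V t powr 1 \<le> V t powr m" using v0 that m
        by (intro powr_mono') auto
      then show ?thesis using False v0 by simp
    qed simp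
    moreover have "\<beta> * V t powr k \<ge> 0" using \<beta>pos by simp
    ultimately show ?thesis using bnd[OF that(1)] \<delta> by (simp add: A'_def algebra_simps)
        (smt (verit, best) mult_left_mono)
  qed
  have high: "V' t \<le> - B' * V t powr k" if "t > 0" "V t \<ge> 1" for t
  proof -
    have "V t powr 1 \<le> V t powr k" using that k by (intro powr_mono) auto
    then have "V t \<le> V t powr k" using that by simp
    moreover have "\<alpha> * V t powr m \<ge> 0" using \<alpha>pos by simp
    ultimately show ?thesis using bnd[OF that(1)] \<delta> by (simp add: B'_def algebra_simps)
        (smt (verit, best) mult_left_mono)
  qed
  have neg: "V' t \<le> 0" if "t > 0" for t
  proof (cases "V t \<le> 1")
    case True
    have "A' * V t powr m \<ge> 0" using A'pos by simp
    then show ?thesis using low[OF that True] by linarith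
  next
    case False
    have "B' * V t powr k \<ge> 0" using B'pos by simp
    then show ?thesis using high[OF that] False by linarith
  qed
  have mono: "V t \<le> V s" if "0 \<le> s" "s \<le> t" for s t
  proof -
    have "(\<lambda>x. - V x) s \<le> (\<lambda>x. - V x) t"
    proof (rule incr_lemma[where g = "\<lambda>x. - V x" and g' = "\<lambda>x. - V' x"])
      show "continuous_on {s..t} (\<lambda>x. - V x)"
        using cont that by (auto intro!: continuous_intros elim: continuous_on_subset)
    qed (use that der neg in \<open>auto intro!: derivative_eq_intros\<close>)
    then show ?thesis by simp
  qed
  define T1 where "T1 = 1/(B'*(k-1))"
  define T2 where "T2 = 1/(A'*(1-m))"
  have T1pos: "T1 > 0" and T2pos: "T2 > 0" using A'pos B'pos m k by (auto simp: T1_def T2_def)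
  have VT1: "V T1 \<le> 1"
  proof (rule ccontr)
    assume "\<not> V T1 \<le> 1"
    hence big: "V T1 > 1" by simp
    have bigall: "V t > 1" if "0 \<le> t" "t \<le> T1" for t using mono[OF that] big by simp
    define g where "g t = V t powr (1-k) - (k-1)*B'*t" for t
    have "g 0 \<le> g T1"
    proof (rule incr_lemma[where g = g and g' = "\<lambda>t. (1-k) * V t powr (1-k-1) * V' t - (k-1)*B'"])
      show "continuous_on {0..T1} g"
        unfolding g_def using bigall
        by (intro continuous_intros continuous_on_subset[OF cont]) force+
      fix t assume t: "0 < t" "t < T1"
      have Vt: "V t > 1" using bigall t by simp
      show "(g has_real_derivative (1-k) * V t powr (1-k-1) * V' t - (k-1)*B') (at t)"
        unfolding g_def using Vt t der
        by (auto intro!: derivative_eq_intros DERIV_fun_powr[where r="1-k", simplified])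
      have "V' t \<le> - B' * V t powr k" using high[of t] Vt t by simp
      hence "(1-k) * V t powr (1-k-1) * V' t \<ge> (1-k) * V t powr (1-k-1) * (- B' * V t powr k)"
        using k by (intro mult_left_mono_neg) (auto simp: mult_nonpos_nonneg)
      moreover have "V t powr (1-k-1) * V t powr k = 1" using Vt by (simp add: powr_add[symmetric])
      ultimately show "(1-k) * V t powr (1-k-1) * V' t - (k-1)*B' \<ge> 0"
        by (simp add: algebra_simps)
    qed (use T1pos in simp)
    moreover have "(k-1)*B'*T1 = 1" using k B'pos by (simp add: T1_def)
    ultimately have "V 0 powr (1-k) \<le> V T1 powr (1-k) - 1" by (simp add: g_def)
    moreover have "V 0 powr (1-k) > 0" using bigall[of 0] T1pos by simp
    moreover have "V T1 powr (1-k) < 1" using big k by (intro powr_less_one) auto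
    ultimately show False by simp
  qed
  have VT: "V (T1+T2) = 0"
  proof (rule ccontr)
    assume "V (T1+T2) \<noteq> 0"
    hence pos: "V (T1+T2) > 0" using nn[of "T1+T2"] T1pos T2pos by simp
    have posall: "V t > 0" if "T1 \<le> t" "t \<le> T1+T2" for t using mono[OF _ that(2)] that T1pos pos by simp
    have leall: "V t \<le> 1" if "T1 \<le> t" for t using mono[OF _ that] T1pos VT1 by simp
    define h where "h t = - (V t powr (1-m) + (1-m)*A'*t)" for t
    have "h T1 \<le> h (T1+T2)"
    proof (rule incr_lemma[where g = h and g' = "\<lambda>t. - ((1-m) * V t powr (1-m-1) * V' t + (1-m)*A')"])
      show "continuous_on {T1..T1+T2} h"
        unfolding h_def using posall T1pos
        by (intro continuous_intros continuous_on_subset[OF cont]) force+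
      fix t assume t: "T1 < t" "t < T1+T2"
      have Vt: "V t > 0" "V t \<le> 1" using posall leall t by auto
      have tp: "t > 0" using t T1pos by simp
      show "(h has_real_derivative - ((1-m) * V t powr (1-m-1) * V' t + (1-m)*A')) (at t)"
        unfolding h_def using Vt tp der
        by (auto intro!: derivative_eq_intros DERIV_fun_powr[where r="1-m", simplified])
      have "V' t \<le> - A' * V t powr m" using low[of t] Vt tp by simp
      hence "(1-m) * V t powr (1-m-1) * V' t \<le> (1-m) * V t powr (1-m-1) * (- A' * V t powr m)"
        using m by (intro mult_left_mono) auto
      moreover have "V t powr (1-m-1) * V t powr m = 1" using Vt by (simp add: powr_add[symmetric])
      ultimately show "- ((1-m) * V t powr (1-m-1) * V' t + (1-m)*A') \<ge> 0"
        by (simp add: algebra_simps)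
    qed (use T2pos in simp)
    moreover have "(1-m)*A'*T2 = 1" using m A'pos by (simp add: T2_def)
    ultimately have "V (T1+T2) powr (1-m) \<le> V T1 powr (1-m) - 1" by (simp add: h_def algebra_simps)
    moreover have "V (T1+T2) powr (1-m) > 0" using pos by simp
    moreover have "V T1 powr (1-m) \<le> 1" using powr_mono2[of "1-m" "V T1" 1] VT1 nn[of T1] T1pos m by simp
    ultimately show False by simp
  qed
  show ?thesis
  proof (intro allI impI)
    fix t assume "t \<ge> 1/((\<alpha> - 2*\<delta>)*(1-m)) + 1/((\<beta> - 2*\<delta>)*(k-1))"
    hence t: "t \<ge> T1 + T2" by (simp add: T1_def T2_def A'_def B'_def)
    show "V t = 0" using mono[OF _ t] VT nn[of t] T1pos T2pos t by simp
  qed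
qed



lemma vd_inner:
  fixes f :: "real \<Rightarrow> real^'n"
  assumes d: "(f has_vector_derivative f') (at t)"
  shows "((\<lambda>t. f t \<bullet> f t / 2) has_real_derivative (f t \<bullet> f')) (at t)"
proof -
  have d': "(f has_derivative (\<lambda>h. h *\<^sub>R f')) (at t)" using d by (simp add: has_vector_derivative_def)
  have "((\<lambda>t. f t \<bullet> f t) has_derivative (\<lambda>h. f t \<bullet> (h *\<^sub>R f') + (h *\<^sub>R f') \<bullet> f t)) (at t)"
    by (rule has_derivative_inner[OF d' d'])
  then have "((\<lambda>t. f t \<bullet> f t) has_derivative (\<lambda>h. (2 * (f t \<bullet> f')) * h)) (at t)"
    by (simp add: inner_commute algebra_simps)
  then have "((\<lambda>t. f t \<bullet> f t) has_real_derivative (2 * (f t \<bullet> f'))) (at t)"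
    unfolding has_field_derivative_def by simp
  then show ?thesis by (auto intro!: derivative_eq_intros)
qed

lemma at_pos: "(t::real) > 0 \<Longrightarrow> at t within {0..} = at t"
  by (rule at_within_open_subset[of t "{0<..}"]) auto


theorem corollary2:
  fixes W1 W2 W3 :: "real^'n^'n"
    and J xstar :: "real^'n"
    and \<Phi> :: "real^'n \<Rightarrow> real^'n"
    and \<delta> \<epsilon> \<epsilon>1 \<epsilon>2 p q :: real
    and x :: "real \<Rightarrow> real^'n"
  assumes lip: "\<And>u v. norm (\<Phi> u - \<Phi> v) \<le> norm (W3 *v (u - v))"
    and eq: "W1 *v xstar + W2 *v \<Phi> xstar + J = 0"
    and \<delta>pos: "\<delta> > 0" and \<epsilon>pos: "\<epsilon> > 0"
    and lmi: "loewner_le ((1/2) *\<^sub>R (W1 + transpose W1 + \<epsilon> *\<^sub>R (W2 ** transpose W2)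
                 + inverse \<epsilon> *\<^sub>R (transpose W3 ** W3))) (\<delta> *\<^sub>R mat 1)"
    and \<epsilon>1: "\<epsilon>1 > 0" and \<epsilon>2: "\<epsilon>2 > 0"
    and p: "0 < p" "p < 1" and q: "q > 1"
    and a: "\<epsilon>1 * 2 powr ((1 + p) / 2) - 2 * \<delta> > 0"
    and b: "\<epsilon>2 * real CARD('n) powr ((1 - q) / 2) * 2 powr ((1 + q) / 2) - 2 * \<delta> > 0"
    and sol: "\<And>t. t \<ge> 0 \<Longrightarrow> (x has_vector_derivative
                 (W1 *v x t + W2 *v \<Phi> (x t) + J - \<epsilon>1 *\<^sub>R sig p (x t - xstar)
                  - \<epsilon>2 *\<^sub>R sig q (x t - xstar))) (at t within {0..})"
  shows "\<forall>t \<ge> 2 / ((\<epsilon>1 * 2 powr ((1 + p) / 2) - 2 * \<delta>) * (1 - p))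
              + 2 / ((\<epsilon>2 * real CARD('n) powr ((1 - q) / 2) * 2 powr ((1 + q) / 2) - 2 * \<delta>) * (q - 1)).
           x t = xstar"
  proof -
  define e where "e t = x t - xstar" for t
  define F where "F t = W1 *v x t + W2 *v \<Phi> (x t) + J - \<epsilon>1 *\<^sub>R sig p (x t - xstar)
                  - \<epsilon>2 *\<^sub>R sig q (x t - xstar)" for t
  define V where "V t = e t \<bullet> e t / 2" for t
  define V' where "V' t = e t \<bullet> F t" for t
  define m where "m = (1+p)/2"
  define k where "k = (1+q)/2"
  define \<alpha> where "\<alpha> = \<epsilon>1 * 2 powr ((1 + p) / 2)"
  define \<beta> where "\<beta> = \<epsilon>2 * real CARD('n) powr ((1 - q) / 2) * 2 powr ((1 + q) / 2)"
  have solF: "(x has_vector_derivative F t) (at t within {0..})" if "t \<ge> 0" for t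
    using sol[OF that] by (simp add: F_def)
  have contx: "continuous_on {0..} x"
    unfolding continuous_on_eq_continuous_within
    using solF has_vector_derivative_continuous by (metis atLeast_iff)
  have cont: "continuous_on {0..} V"
    unfolding V_def e_def by (intro continuous_intros contx) auto
  have der: "(V has_real_derivative V' t) (at t)" if "t > 0" for t
  proof -
    have "(x has_vector_derivative F t) (at t)" using solF[of t] that at_pos[OF that] by simp
    then have "(e has_vector_derivative F t) (at t)"
      unfolding e_def by (auto intro!: derivative_eq_intros)
    from vd_inner[OF this] show ?thesis
      unfolding V_def V'_def by simp
  qed
  have nn: "V t \<ge> 0" for t by (simp add: V_def)
  have bnd: "V' t \<le> 2*\<delta>*V t - \<alpha> * V t powr m - \<beta> * V t powr k" for t
  proof -
    define d where "d = \<Phi> (x t) - \<Phi> xstar"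
    have Fe: "F t = (W1 *v e t + W2 *v d) - \<epsilon>1 *\<^sub>R sig p (e t) - \<epsilon>2 *\<^sub>R sig q (e t)"
    proof -
      have "W1 *v x t + W2 *v \<Phi> (x t) + J = (W1 *v e t + W2 *v d) + (W1 *v xstar + W2 *v \<Phi> xstar + J)"
        by (simp add: e_def d_def matrix_vector_mult_diff_distrib)
      then show ?thesis using eq by (simp add: F_def e_def)
    qed
    have L: "e t \<bullet> (W1 *v e t + W2 *v d) \<le> \<delta> * (e t \<bullet> e t)"
      using lin_part[OF _ \<epsilon>pos lmi] lip[of "x t" xstar] by (simp add: d_def e_def)
    have ee: "e t \<bullet> e t = 2 * V t" by (simp add: V_def)
    have P1: "(e t \<bullet> e t) powr m \<le> e t \<bullet> sig p (e t)"
      using sig_low[OF p] by (simp add: m_def)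
    have P2: "real CARD('n) powr ((1-q)/2) * (e t \<bullet> e t) powr k \<le> e t \<bullet> sig q (e t)"
      using sig_high[OF q] by (simp add: k_def)
    have A1: "\<alpha> * V t powr m \<le> \<epsilon>1 * (e t \<bullet> sig p (e t))"
    proof -
      have "\<alpha> * V t powr m = \<epsilon>1 * (e t \<bullet> e t) powr m"
        unfolding ee \<alpha>_def m_def using nn[of t] by (simp add: powr_mult)
      then show ?thesis using P1 \<epsilon>1 by simp
    qed
    have A2: "\<beta> * V t powr k \<le> \<epsilon>2 * (e t \<bullet> sig q (e t))"
    proof -
      have "\<beta> * V t powr k = \<epsilon>2 * (real CARD('n) powr ((1-q)/2) * (e t \<bullet> e t) powr k)"
        unfolding ee \<beta>_def k_def using nn[of t] by (simp add: powr_mult)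
      then show ?thesis using P2 \<epsilon>2 by simp
    qed
    have "V' t = e t \<bullet> (W1 *v e t + W2 *v d) - \<epsilon>1 * (e t \<bullet> sig p (e t)) - \<epsilon>2 * (e t \<bullet> sig q (e t))"
      unfolding V'_def Fe by (simp add: inner_diff_right)
    then show ?thesis using L A1 A2 ee by simp
  qed
  have S: "\<forall>t \<ge> 1/((\<alpha> - 2*\<delta>)*(1-m)) + 1/((\<beta> - 2*\<delta>)*(k-1)). V t = 0"
    by (rule settle[OF cont der nn bnd \<delta>pos])
       (use p q a b in \<open>auto simp: m_def k_def \<alpha>_def \<beta>_def\<close>)
  have T: "1/((\<alpha> - 2*\<delta>)*(1-m)) + 1/((\<beta> - 2*\<delta>)*(k-1))
     = 2 / ((\<epsilon>1 * 2 powr ((1 + p) / 2) - 2 * \<delta>) * (1 - p))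
              + 2 / ((\<epsilon>2 * real CARD('n) powr ((1 - q) / 2) * 2 powr ((1 + q) / 2) - 2 * \<delta>) * (q - 1))"
    unfolding \<alpha>_def \<beta>_def m_def k_def by (simp add: field_simps)
  show ?thesis
  proof (intro allI impI)
    fix t assume "t \<ge> 2 / ((\<epsilon>1 * 2 powr ((1 + p) / 2) - 2 * \<delta>) * (1 - p))
              + 2 / ((\<epsilon>2 * real CARD('n) powr ((1 - q) / 2) * 2 powr ((1 + q) / 2) - 2 * \<delta>) * (q - 1))"
    then have "V t = 0" using S T by simp
    then have "e t = 0" by (simp add: V_def)
    then show "x t = xstar" by (simp add: e_def)
  qed
qed

end
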